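(* Let $q,m$ be positive integers with $q\ge 2$. Let $\mathbf{B}^{q,m}=[b_{j,k}]$ be the $(q-1)q^m\times q(m+1)$ array with rows indexed by $j\in[0,(q-1)q^m)$ and columns by $k\in[0,q(m+1))$, defined as follows. Write $j=(j_m,j_{m-1},\dots,j_0)_q$ (so $j_m\in[0,q-1)$) and $k=uq+v$ with $0\le u\le m$, $0\le v<q$. If $0\le u<m$: $$b_{j,k}=\begin{cases} (j_{m-1},\dots,j_{u+1},\ j_u+j_m+1,\ j_{u-1},\dots,j_0)_q, & j_u=v,\\ *, & j_u\ne v.\end{cases}$$ If $u=m$: $$b_{j,k}=\begin{cases} (j_{m-1},\dots,j_0)_q, & j_0+\cdots+j_{m-1}+j_m=v-1,\\ *, & j_0+\cdots+j_{m-1}+j_m\ne v-1,\end{cases}$$ where all additions and subtractions of digits (including in the conditions) are performed modulo $q$ (with results in $[0,q)$). Then $\mathbf{B}^{q,m}$ is a $(q-1)(m+1)$-regular $(q(m+1),\,(q-1)q^m,\,(q-1)^2q^{m-1},\,q^m)$ PDA, and its rate $S/F$ equals $1/(q-1)$.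
   Context: Notation: $[i,j)=\{i,\dots,j-1\}$. For an integer $s$ with $s=\sum_{l=0}^{n-1}s_lq^l$, $s_l\in[0,q)$, we write $s=(s_{n-1},\dots,s_0)_q$ (the $q$-ary representation; the leftmost digit is most significant). For positive integers $K,F,Z,S$ and an integer $g$, an $F\times K$ array $\mathbf{P}=[p_{j,k}]$ whose entries are either a special symbol $*$ or one of the integers $0,1,\dots,S-1$ is a $g$-regular $(K,F,Z,S)$ PDA if: (C1) the symbol $*$ appears exactly $Z$ times in each column; (C2') each integer in $[0,S)$ appears exactly $g$ times in $\mathbf{P}$; (C3) for any two distinct entries with $p_{j_1,k_1}=p_{j_2,k_2}=s$ an integer, we have $j_1\neq j_2$, $k_1\neq k_2$, and $p_{j_1,k_2}=p_{j_2,k_1}=*$. The rate of such a PDA (i.e. of its associated caching scheme) is $R=S/F$. *)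

theory Defs
  imports Complex_Main
begin

text \<open>An F x K array with entries either * (None) or an integer (Some s).
  Rows are indexed by j < F, columns by k < K.\<close>

definition is_PDA :: "nat \<Rightarrow> nat \<Rightarrow> nat \<Rightarrow> nat \<Rightarrow> (nat \<Rightarrow> nat \<Rightarrow> nat option) \<Rightarrow> bool" where
  "is_PDA K F Z S P \<longleftrightarrow>
     (\<forall>j<F. \<forall>k<K. \<forall>s. P j k = Some s \<longrightarrow> s < S) \<and>
     (\<forall>k<K. card {j. j < F \<and> P j k = None} = Z) \<and>
     (\<forall>j1<F. \<forall>k1<K. \<forall>j2<F. \<forall>k2<K. \<forall>s.
        (j1, k1) \<noteq> (j2, k2) \<and> P j1 k1 = Some s \<and> P j2 k2 = Some s \<longrightarrow>
        j1 \<noteq> j2 \<and> k1 \<noteq> k2 \<and> P j1 k2 = None \<and> P j2 k1 = None)"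

definition is_regular_PDA :: "nat \<Rightarrow> nat \<Rightarrow> nat \<Rightarrow> nat \<Rightarrow> nat \<Rightarrow> (nat \<Rightarrow> nat \<Rightarrow> nat option) \<Rightarrow> bool" where
  "is_regular_PDA g K F Z S P \<longleftrightarrow> is_PDA K F Z S P \<and>
     (\<forall>s<S. card {(j, k). j < F \<and> k < K \<and> P j k = Some s} = g)"

definition PDA_rate :: "nat \<Rightarrow> nat \<Rightarrow> real" where
  "PDA_rate S F = real S / real F"

definition digit :: "nat \<Rightarrow> nat \<Rightarrow> nat \<Rightarrow> nat" where
  "digit q n l = n div q ^ l mod q"

definition B_arr :: "nat \<Rightarrow> nat \<Rightarrow> nat \<Rightarrow> nat \<Rightarrow> nat option" where
  "B_arr q m j k =
     (let u = k div q; v = k mod q in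
      if u < m then
        (if digit q j u = v then
           Some (\<Sum>l<m. (if l = u then (digit q j u + digit q j m + 1) mod q
                          else digit q j l) * q ^ l)
         else None)
      else
        (if int ((\<Sum>l\<le>m. digit q j l) mod q) = (int v - 1) mod int q
         then Some (\<Sum>l<m. digit q j l * q ^ l)
         else None))"

end

theory Submission
  imports Defs
begin

lemma digit_decomp:
  assumes q: "q > 0" and y: "y < q^i" and d: "d < q"
  shows "digit q (A*q^(Suc i) + d*q^i + y) l =
    (if l < i then digit q y l else if l = i then d else digit q A (l - Suc i))"
proof (cases "l < i")
  case True
  define t where "t = i - Suc l"
  have i: "i = l + Suc t" using True unfolding t_def by arith
  have N: "A*q^(Suc i) + d*q^i + y = (q*(A*q^(Suc t) + d*q^t)) * q^l + y"
    unfolding i by (simp add: power_add algebra_simps)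
  have "(A*q^(Suc i) + d*q^i + y) div q^l = q*(A*q^(Suc t) + d*q^t) + y div q^l"
    unfolding N using q by simp
  then show ?thesis using True unfolding digit_def by simp
next
  case False
  have lt: "d*q^i + y < q^Suc i"
  proof -
    have "d*q^i + y < d*q^i + q^i" using y by simp
    also have "\<dots> = (d+1)*q^i" by simp
    also have "\<dots> \<le> q*q^i" using d by (intro mult_right_mono) auto
    finally show ?thesis by simp
  qed
  show ?thesis
  proof (cases "l = i")
    case True
    have "A*q^(Suc i) + d*q^i + y = (A*q + d)*q^i + y" by (simp add: algebra_simps)
    then have "(A*q^(Suc i) + d*q^i + y) div q^i = A*q + d" using q y by simp
    then show ?thesis using True d unfolding digit_def by simp
  next
    case False2: False
    define t where "t = l - Suc i"
    have l: "l = Suc i + t" using False False2 unfolding t_def by arith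
    have "(A*q^(Suc i) + d*q^i + y) div q^(Suc i) = A"
      using lt q by (simp add: add.assoc)
    then have "(A*q^(Suc i) + d*q^i + y) div q^l = A div q^t"
      unfolding l power_add by (simp add: div_mult2_eq)
    then show ?thesis using False False2 l unfolding digit_def by simp
  qed
qed

definition rep :: "nat \<Rightarrow> nat \<Rightarrow> (nat \<Rightarrow> nat) \<Rightarrow> nat" where
  "rep q m g = (\<Sum>l<m. g l * q^l)"

lemma rep_lt: assumes "q > 0" "\<forall>l<m. g l < q" shows "rep q m g < q^m"
  using assms(2)
proof (induction m)
  case 0 then show ?case by (simp add: rep_def)
next
  case (Suc m)
  have "rep q (Suc m) g = rep q m g + g m * q^m" by (simp add: rep_def)
  also have "\<dots> < q^m + g m * q^m" using Suc by simp
  also have "\<dots> = (g m + 1) * q^m" by simp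
  also have "\<dots> \<le> q * q^m" using Suc.prems by (intro mult_right_mono) auto
  finally show ?case by simp
qed

lemma digit_rep: assumes "q > 0" "\<forall>l<m. g l < q" "i < m" shows "digit q (rep q m g) i = g i"
  using assms(2,3)
proof (induction m)
  case 0 then show ?case by simp
next
  case (Suc m)
  have r: "rep q (Suc m) g = 0*q^(Suc m) + g m * q^m + rep q m g" by (simp add: rep_def)
  have "digit q (rep q (Suc m) g) i = (if i < m then digit q (rep q m g) i else if i = m then g m else digit q 0 (i - Suc m))"
    unfolding r by (rule digit_decomp) (use assms(1) Suc.prems rep_lt[OF assms(1)] in auto)
  then show ?case using Suc by (auto simp: less_Suc_eq)
qed

lemma rep_digit: assumes "q > 0" shows "rep q m (digit q x) = x mod q^m"
proof (induction m)
  case 0 then show ?case by (simp add: rep_def)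
next
  case (Suc m)
  have "x mod q^(Suc m) = x mod (q^m * q)" by (simp add: mult.commute)
  also have "\<dots> = q^m * (x div q^m mod q) + x mod q^m" by (rule mod_mult2_eq)
  finally show ?case using Suc by (simp add: rep_def digit_def)
qed


lemma low_lt:
  fixes q y i d :: nat
  assumes y: "y < q^i" and d: "d < q"
  shows "d*q^i + y < q^Suc i"
proof -
  have "d*q^i + y < d*q^i + q^i" using y by (rule add_strict_left_mono)
  also have "\<dots> = (d+1)*q^i" by simp
  also have "\<dots> \<le> q*q^i" using d by (intro mult_right_mono) auto
  finally show ?thesis by simp
qed

lemma decomp_inv:
  fixes q y i d A :: nat
  assumes q: "q > 0" and y: "y < q^i" and d: "d < q"
  shows "(A*q^(Suc i) + d*q^i + y) div q^(Suc i) = A" "(A*q^(Suc i) + d*q^i + y) mod q^i = y"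
proof -
  have lt: "d*q^i + y < q^Suc i"
  proof -
    have "d*q^i + y < d*q^i + q^i" using y by (rule add_strict_left_mono)
    also have "\<dots> = (d+1)*q^i" by simp
    also have "\<dots> \<le> q*q^i" using d by (intro mult_right_mono) auto
    finally show ?thesis by simp
  qed
  show "(A*q^(Suc i) + d*q^i + y) div q^(Suc i) = A"
    using lt q by (simp add: add.assoc)
  have "A*q^(Suc i) + d*q^i + y = (A*q + d)*q^i + y" by (simp add: algebra_simps)
  then show "(A*q^(Suc i) + d*q^i + y) mod q^i = y" using y by simp
qed

lemma decomp:
  assumes q: "q > 0"
  shows "j = (j div q^(Suc i))*q^(Suc i) + digit q j i * q^i + j mod q^i"
proof -
  have "j mod q^(Suc i) = j mod (q^i * q)" by (simp add: mult.commute)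
  also have "\<dots> = q^i * (j div q^i mod q) + j mod q^i" by (rule mod_mult2_eq)
  finally have "j mod q^(Suc i) = digit q j i * q^i + j mod q^i" by (simp add: digit_def mult.commute)
  moreover have "j = (j div q^(Suc i))*q^(Suc i) + j mod q^(Suc i)" by (rule div_mult_mod_eq[symmetric])
  ultimately show ?thesis by simp
qed

lemma int_mod_eq_small:
  fixes a b q :: nat
  assumes "a < q" "b < q" "int q dvd (int a - int b)"
  shows "a = b"
proof -
  obtain c where c: "int a - int b = int q * c" using assms(3) by (auto simp: dvd_def)
  show ?thesis
  proof (cases "c = 0")
    case True then show ?thesis using c by simp
  next
    case False
    then have "c \<ge> 1 \<or> c \<le> -1" by linarith
    then show ?thesis
    proof
      assume "c \<ge> 1" then have "int q * c \<ge> int q" by (simp add: mult_le_cancel_left1 )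
      then show ?thesis using c assms by linarith
    next
      assume "c \<le> -1" then have "int q * c \<le> - int q" using mult_left_mono[of c "-1" "int q"] by simp
      then show ?thesis using c assms by linarith
    qed
  qed
qed

lemma rep_cong: "(\<And>l. l < m \<Longrightarrow> f l = g l) \<Longrightarrow> rep q m f = rep q m g"
  unfolding rep_def by (rule sum.cong) auto

locale qm =
  fixes q m :: nat
  assumes q2: "q \<ge> 2" and m1: "m \<ge> 1"
begin

lemma q0: "q > 0" using q2 by simp

lemma row_digits:
  assumes "j < (q-1)*q^m"
  shows "j div q^m < q - 1" "digit q j m = j div q^m"
proof -
  show a: "j div q^m < q - 1" using assms by (simp add: less_mult_imp_div_less)
  then show "digit q j m = j div q^m" unfolding digit_def by simp
qed

lemma row_split: "j = rep q m (digit q j) + (j div q^m) * q^m"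
  using rep_digit[OF q0, of m j] by (metis mod_div_mult_eq)

lemma row_eq:
  assumes "j1 < (q-1)*q^m" "j2 < (q-1)*q^m" "\<And>l. l \<le> m \<Longrightarrow> digit q j1 l = digit q j2 l"
  shows "j1 = j2"
proof -
  have "rep q m (digit q j1) = rep q m (digit q j2)" by (rule rep_cong) (use assms(3) in auto)
  moreover have "j1 div q^m = j2 div q^m" using assms(3)[of m] row_digits(2)[OF assms(1)] row_digits(2)[OF assms(2)] by simp
  ultimately show ?thesis using row_split[of j1] row_split[of j2] by simp
qed

lemma mk_row:
  assumes g: "\<forall>l<m. g l < q" and a: "a < q - 1"
  shows "rep q m g + a*q^m < (q-1)*q^m"
    "\<And>l. l < m \<Longrightarrow> digit q (rep q m g + a*q^m) l = g l"
    "digit q (rep q m g + a*q^m) m = a"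
    "(rep q m g + a*q^m) div q^m = a"
proof -
  have r: "rep q m g < q^m" using rep_lt[OF q0 g] .
  have e: "rep q m g + a*q^m = 0*q^(Suc m) + a*q^m + rep q m g" by simp
  have "rep q m g + a*q^m < q^m + a*q^m" using r by simp
  also have "\<dots> = (a+1)*q^m" by simp
  also have "\<dots> \<le> (q-1)*q^m" using a by (intro mult_right_mono) auto
  finally show "rep q m g + a*q^m < (q-1)*q^m" .
  fix l assume l: "l < m"
  show "digit q (rep q m g + a*q^m) l = g l"
    unfolding e using digit_decomp[OF q0 r, of a 0 l] a l digit_rep[OF q0 g l] by simp
next
  have r: "rep q m g < q^m" using rep_lt[OF q0 g] .
  have e: "rep q m g + a*q^m = 0*q^(Suc m) + a*q^m + rep q m g" by simp
  show "digit q (rep q m g + a*q^m) m = a"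
    unfolding e using digit_decomp[OF q0 r, of a 0 m] a by simp
  have "(rep q m g + a*q^m) div q^m = a + rep q m g div q^m" using div_mult_self1[of "q^m" "rep q m g" a] q0 by simp
  then show "(rep q m g + a*q^m) div q^m = a" using r by simp
qed


lemma B_lt:
  assumes "u < m" "v < q"
  shows "B_arr q m j (u*q+v) = (if digit q j u = v then Some (rep q m (\<lambda>l. if l = u then (digit q j u + digit q j m + 1) mod q else digit q j l)) else None)"
proof -
  have dm: "(u*q+v) div q = u" "(u*q+v) mod q = v" using assms q0 by auto
  show ?thesis using assms unfolding B_arr_def rep_def Let_def dm by simp
qed

lemma nat_mod_eq_dvd: "((a::nat) mod q = b mod q) = (int q dvd int a - int b)"
proof -
  have "(a mod q = b mod q) = (int (a mod q) = int (b mod q))" by (rule of_nat_eq_iff[symmetric])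
  also have "\<dots> = (int a mod int q = int b mod int q)" by (simp add: of_nat_mod)
  also have "\<dots> = (int q dvd int a - int b)" by (rule mod_eq_dvd_iff)
  finally show ?thesis .
qed

lemma B_m:
  assumes "v < q"
  shows "B_arr q m j (m*q+v) = (if int q dvd (int (\<Sum>l<m. digit q j l) + int (digit q j m) - int v + 1) then Some (rep q m (digit q j)) else None)"
proof -
  have dm: "(m*q+v) div q = m" "(m*q+v) mod q = v" using assms q0 by auto
  have s: "(\<Sum>l\<le>m. digit q j l) = (\<Sum>l<m. digit q j l) + digit q j m"
    by (simp add: lessThan_Suc_atMost[symmetric])
  have "(int ((\<Sum>l\<le>m. digit q j l) mod q) = (int v - 1) mod int q) =
        (int (\<Sum>l\<le>m. digit q j l) mod int q = (int v - 1) mod int q)" by (simp add: of_nat_mod)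
  also have "\<dots> = (int q dvd (int (\<Sum>l\<le>m. digit q j l) - (int v - 1)))" by (rule mod_eq_dvd_iff)
  also have "\<dots> = (int q dvd (int (\<Sum>l<m. digit q j l) + int (digit q j m) - int v + 1))"
    unfolding s by (simp add: algebra_simps)
  finally have c: "(int ((\<Sum>l\<le>m. digit q j l) mod q) = (int v - 1) mod int q) = (int q dvd (int (\<Sum>l<m. digit q j l) + int (digit q j m) - int v + 1))" .
  show ?thesis unfolding B_arr_def Let_def dm rep_def using c by simp
qed

lemma digit_lt: "digit q j l < q" unfolding digit_def using q0 by simp

lemma col_split:
  assumes "k < q*(m+1)"
  obtains u v where "k = u*q+v" "u \<le> m" "v < q"
proof -
  have "k div q < m + 1" using assms by (simp add: less_mult_imp_div_less mult.commute)
  moreover have "k = (k div q)*q + k mod q" by simp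
  moreover have "k mod q < q" using q0 by simp
  ultimately show ?thesis using that[of "k div q" "k mod q"] by simp
qed

lemma sum_upd:
  fixes f :: "nat \<Rightarrow> nat"
  assumes "u < m"
  shows "int (\<Sum>l<m. (if l = u then w else f l)) - int (\<Sum>l<m. f l) = int w - int (f u)"
proof -
  have u: "u \<in> {..<m}" using assms by simp
  have 1: "(\<Sum>l<m. (if l = u then w else f l)) = w + (\<Sum>l\<in>{..<m}-{u}. (if l = u then w else f l))"
    using sum.remove[OF _ u, of "\<lambda>l. if l = u then w else f l"] by simp
  have 2: "(\<Sum>l<m. f l) = f u + (\<Sum>l\<in>{..<m}-{u}. f l)"
    using sum.remove[OF _ u, of f] by simp
  have 3: "(\<Sum>l\<in>{..<m}-{u}. (if l = u then w else f l)) = (\<Sum>l\<in>{..<m}-{u}. f l)"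
    by (rule sum.cong) auto
  show ?thesis unfolding 1 2 3 by simp
qed

lemma upd_ne: "v < q \<Longrightarrow> a < q - 1 \<Longrightarrow> (v + a + 1) mod q \<noteq> v"
proof
  assume v: "v < q" and a: "a < q - 1" and e: "(v + a + 1) mod q = v"
  have "(v + a + 1) mod q = v mod q" using e v by simp
  then have "int q dvd int (v+a+1) - int v" by (simp only: nat_mod_eq_dvd)
  then have "int q dvd int (a+1) - int 0" by simp
  moreover have "a+1 < q" using a by linarith
  ultimately have "a + 1 = 0" using int_mod_eq_small[of "a+1" q 0] q0 by blast
  then show False by simp
qed

lemma key_none:
  assumes j1: "j1 < (q-1)*q^m" and j2: "j2 < (q-1)*q^m" and k1: "k1 < q*(m+1)" and k2: "k2 < q*(m+1)"
    and ne: "(j1,k1) \<noteq> (j2,k2)" and s1: "B_arr q m j1 k1 = Some s" and s2: "B_arr q m j2 k2 = Some s"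
  shows "B_arr q m j1 k2 = None"
proof -
  obtain u1 v1 where k1e: "k1 = u1*q+v1" "u1 \<le> m" "v1 < q" using col_split[OF k1] by blast
  obtain u2 v2 where k2e: "k2 = u2*q+v2" "u2 \<le> m" "v2 < q" using col_split[OF k2] by blast
  define a1 where "a1 = digit q j1 m"
  define a2 where "a2 = digit q j2 m"
  have a1: "a1 < q-1" using row_digits[OF j1] a1_def by simp
  have a2: "a2 < q-1" using row_digits[OF j2] a2_def by simp
  have dl: "\<And>j l. digit q j l < q" by (rule digit_lt)
  let ?S = "\<lambda>j. \<Sum>l<m. digit q j l"
  show ?thesis
  proof (cases "u2 < m")
    case True
    from s2 have d2: "digit q j2 u2 = v2" and sv2: "s = rep q m (\<lambda>l. if l = u2 then (v2 + a2 + 1) mod q else digit q j2 l)"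
      unfolding k2e(1) B_lt[OF True k2e(3)] a2_def by (auto split: if_splits)
    have gs2: "\<forall>l<m. (\<lambda>l. if l = u2 then (v2 + a2 + 1) mod q else digit q j2 l) l < q" using q0 dl by auto
    have ds2: "\<And>l. l<m \<Longrightarrow> digit q s l = (if l = u2 then (v2 + a2 + 1) mod q else digit q j2 l)"
      unfolding sv2 using digit_rep[OF q0 gs2] by simp
    have "digit q j1 u2 \<noteq> v2"
    proof (cases "u1 < m")
      case u1: True
      from s1 have d1: "digit q j1 u1 = v1" and sv1: "s = rep q m (\<lambda>l. if l = u1 then (v1 + a1 + 1) mod q else digit q j1 l)"
        unfolding k1e(1) B_lt[OF u1 k1e(3)] a1_def by (auto split: if_splits)
      have gs1: "\<forall>l<m. (\<lambda>l. if l = u1 then (v1 + a1 + 1) mod q else digit q j1 l) l < q" using q0 dl by auto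
      have ds1: "\<And>l. l<m \<Longrightarrow> digit q s l = (if l = u1 then (v1 + a1 + 1) mod q else digit q j1 l)"
        unfolding sv1 using digit_rep[OF q0 gs1] by simp
      show ?thesis
      proof (cases "u1 = u2")
        case False
        then have "digit q j1 u2 = digit q s u2" using ds1[OF True] by simp
        also have "\<dots> = (v2 + a2 + 1) mod q" using ds2[OF True] by simp
        finally show ?thesis using upd_ne[OF k2e(3) a2] by simp
      next
        case eq: True
        show ?thesis
        proof
          assume e: "digit q j1 u2 = v2"
          then have v: "v1 = v2" using d1 eq by simp
          have "(v1 + a1 + 1) mod q = (v2 + a2 + 1) mod q" using ds1[OF u1] ds2[OF True] eq by simp
          then have "int q dvd int a1 - int a2" unfolding nat_mod_eq_dvd v by simp
          then have a: "a1 = a2" using int_mod_eq_small[of a1 q a2] a1 a2 by simp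
          have "j1 = j2"
          proof (rule row_eq[OF j1 j2])
            fix l assume l: "l \<le> m"
            show "digit q j1 l = digit q j2 l"
            proof (cases "l = m")
              case True then show ?thesis using a a1_def a2_def by simp
            next
              case False
              then have lm: "l < m" using l by simp
              show ?thesis
              proof (cases "l = u2")
                case True then show ?thesis using d1 d2 eq v by simp
              next
                case False then show ?thesis using ds1[OF lm] ds2[OF lm] eq by simp
              qed
            qed
          qed
          moreover have "k1 = k2" using k1e k2e eq v by simp
          ultimately show False using ne by simp
        qed
      qed
    next
      case u1: False
      then have u1m: "u1 = m" using k1e(2) by simp
      from s1 have sv1: "s = rep q m (digit q j1)" unfolding k1e(1) u1m B_m[OF k1e(3)] by (auto split: if_splits)
      have "digit q j1 u2 = digit q s u2" unfolding sv1 using digit_rep[OF q0 _ True] dl by simp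
      also have "\<dots> = (v2+a2+1) mod q" using ds2[OF True] by simp
      finally show ?thesis using upd_ne[OF k2e(3) a2] by simp
    qed
    then show ?thesis unfolding k2e(1) B_lt[OF True k2e(3)] by simp
  next
    case False
    then have u2m: "u2 = m" using k2e(2) by simp
    from s2 have c2: "int q dvd int (?S j2) + int a2 - int v2 + 1" and sv2: "s = rep q m (digit q j2)"
      unfolding k2e(1) u2m B_m[OF k2e(3)] a2_def by (auto split: if_splits)
    have ds2: "\<And>l. l < m \<Longrightarrow> digit q s l = digit q j2 l" unfolding sv2 using digit_rep[OF q0] dl by simp
    have Ss: "?S s = ?S j2" by (rule sum.cong) (auto simp: ds2)
    have "\<not> int q dvd int (?S j1) + int a1 - int v2 + 1"
    proof (cases "u1 < m")
      case u1: True
      from s1 have d1: "digit q j1 u1 = v1" and sv1: "s = rep q m (\<lambda>l. if l = u1 then (v1 + a1 + 1) mod q else digit q j1 l)"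
        unfolding k1e(1) B_lt[OF u1 k1e(3)] a1_def by (auto split: if_splits)
      have gs1: "\<forall>l<m. (\<lambda>l. if l = u1 then (v1 + a1 + 1) mod q else digit q j1 l) l < q" using q0 dl by auto
      have ds1: "\<And>l. l<m \<Longrightarrow> digit q s l = (if l = u1 then (v1 + a1 + 1) mod q else digit q j1 l)"
        unfolding sv1 using digit_rep[OF q0 gs1] by simp
      have "?S s = (\<Sum>l<m. if l = u1 then (v1+a1+1) mod q else digit q j1 l)" by (rule sum.cong) (auto simp: ds1)
      then have dif: "int (?S s) - int (?S j1) = int ((v1+a1+1) mod q) - int v1"
        using sum_upd[OF u1, where w="(v1+a1+1) mod q" and f="digit q j1"] d1 by simp
      have md: "int q dvd int ((v1+a1+1) mod q) - int (v1+a1+1)"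
        using nat_mod_eq_dvd[where a="(v1+a1+1) mod q" and b="v1+a1+1"] by simp
      show ?thesis
      proof
        assume c1: "int q dvd int (?S j1) + int a1 - int v2 + 1"
        have D: "int q dvd (int (?S j2) + int a2 - int v2 + 1) - (int (?S j1) + int a1 - int v2 + 1) - (int ((v1+a1+1) mod q) - int (v1+a1+1))"
          by (rule dvd_diff[OF dvd_diff[OF c2 c1] md])
        have E: "(int (?S j2) + int a2 - int v2 + 1) - (int (?S j1) + int a1 - int v2 + 1) - (int ((v1+a1+1) mod q) - int (v1+a1+1)) = int (a2+1) - int 0"
          using dif Ss by simp
        have "int q dvd int (a2+1) - int 0" using D unfolding E .
        moreover have "a2+1 < q" using a2 by linarith
        ultimately have "a2 + 1 = 0" using int_mod_eq_small[of "a2+1" q 0] q0 by blast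
        then show False by simp
      qed
    next
      case u1: False
      then have u1m: "u1 = m" using k1e(2) by simp
      from s1 have c1: "int q dvd int (?S j1) + int a1 - int v1 + 1" and sv1: "s = rep q m (digit q j1)"
        unfolding k1e(1) u1m B_m[OF k1e(3)] a1_def by (auto split: if_splits)
      have ds1: "\<And>l. l < m \<Longrightarrow> digit q s l = digit q j1 l" unfolding sv1 using digit_rep[OF q0] dl by simp
      have SS: "?S j1 = ?S j2" by (rule sum.cong) (auto simp: ds1[symmetric] ds2[symmetric])
      show ?thesis
      proof
        assume c: "int q dvd int (?S j1) + int a1 - int v2 + 1"
        have "int q dvd (int (?S j1) + int a1 - int v2 + 1) - (int (?S j2) + int a2 - int v2 + 1)" using c c2 by (rule dvd_diff)
        then have "int q dvd int a1 - int a2" using SS by simp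
        then have a: "a1 = a2" using int_mod_eq_small[of a1 q a2] a1 a2 by simp
        have jj: "j1 = j2"
        proof (rule row_eq[OF j1 j2])
          fix l assume "l \<le> m" then show "digit q j1 l = digit q j2 l"
            using ds1 ds2 a a1_def a2_def by (cases "l = m") auto
        qed
        have "int q dvd (int (?S j1) + int a1 - int v1 + 1) - (int (?S j1) + int a1 - int v2 + 1)" using c1 c by (rule dvd_diff)
        then have "int q dvd int v2 - int v1" by simp
        then have "v2 = v1" using int_mod_eq_small[of v2 q v1] k1e(3) k2e(3) by simp
        then have "k1 = k2" using k1e k2e u1m u2m by simp
        then show False using ne jj by simp
      qed
    qed
    then show ?thesis unfolding k2e(1) u2m B_m[OF k2e(3)] a1_def by simp
  qed
qed


lemma col_lt: "u \<le> m \<Longrightarrow> v < q \<Longrightarrow> u*q+v < q*(m+1)"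
proof -
  assume u: "u \<le> m" and v: "v < q"
  have "u*q+v < u*q+q" using v by simp
  also have "\<dots> = (u+1)*q" by simp
  also have "\<dots> \<le> (m+1)*q" using u by (intro mult_right_mono) auto
  finally show ?thesis by (simp add: mult.commute)
qed

lemma val_count:
  assumes s: "s < q^m"
  shows "card {(j,k). j < (q-1)*q^m \<and> k < q*(m+1) \<and> B_arr q m j k = Some s} = (q-1)*(m+1)"
proof -
  define vv where "vv u a = (digit q s u + (q - 1 - a)) mod q" for u a
  define w where "w a = ((\<Sum>l<m. digit q s l) + a + 1) mod q" for a
  define G where "G u a = (\<lambda>l. if u < m \<and> l = u then vv u a else digit q s l)" for u a
  define f where "f = (\<lambda>(u,a). (rep q m (G u a) + a*q^m, u*q + (if u < m then vv u a else w a)))"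
  define g where "g = (\<lambda>(j::nat,k::nat). (k div q, j div q^m))"
  let ?A = "{..<m+1} \<times> {..<q-1}"
  let ?T = "{(j,k). j < (q-1)*q^m \<and> k < q*(m+1) \<and> B_arr q m j k = Some s}"
  have Gq: "\<forall>l<m. G u a l < q" for u a using digit_lt q0 by (auto simp: G_def vv_def)
  have sd: "s = rep q m (digit q s)" using rep_digit[OF q0, of m s] s by simp
  have vvq: "vv u a < q" for u a using q0 by (simp add: vv_def)
  have wq: "w a < q" for a using q0 by (simp add: w_def)
  have bij: "bij_betw f ?A ?T"
  proof (rule bij_betw_byWitness[where f'=g])
    show "\<forall>x\<in>?A. g (f x) = x"
    proof
      fix x assume "x \<in> ?A"
      then obtain u a where x: "x = (u,a)" "u \<le> m" "a < q-1" by auto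
      have "(u*q + (if u < m then vv u a else w a)) div q = u" using q0 vvq wq by simp
      moreover have "(rep q m (G u a) + a*q^m) div q^m = a" by (rule mk_row(4)[OF Gq x(3)])
      ultimately show "g (f x) = x" unfolding x f_def g_def by simp
    qed
    show "\<forall>y\<in>?T. f (g y) = y"
    proof
      fix y assume "y \<in> ?T"
      then obtain j k where y: "y = (j,k)" and j: "j < (q-1)*q^m" and k: "k < q*(m+1)" and P: "B_arr q m j k = Some s" by auto
      obtain u v where ke: "k = u*q+v" "u \<le> m" "v < q" using col_split[OF k] by blast
      define a where "a = j div q^m"
      have a: "a < q-1" and am: "digit q j m = a" using row_digits[OF j] a_def by auto
      have gy: "g y = (u, a)" unfolding y g_def ke(1) a_def using ke(3) by simp
      have djv: "(\<forall>l<m. digit q j l = G u a l) \<and> v = (if u < m then vv u a else w a)"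
      proof (cases "u < m")
        case True
        from P have d: "digit q j u = v" and sv: "s = rep q m (\<lambda>l. if l = u then (v + a + 1) mod q else digit q j l)"
          unfolding ke(1) B_lt[OF True ke(3)] am by (auto split: if_splits)
        have gs: "\<forall>l<m. (\<lambda>l. if l = u then (v + a + 1) mod q else digit q j l) l < q" using q0 digit_lt by auto
        have ds: "\<And>l. l<m \<Longrightarrow> digit q s l = (if l = u then (v + a + 1) mod q else digit q j l)"
          unfolding sv using digit_rep[OF q0 gs] by simp
        have "v + a + 1 + (q - 1 - a) = v + q" using a by arith
        moreover have "((v + a + 1) mod q + (q - 1 - a)) mod q = ((v + a + 1) + (q - 1 - a)) mod q" by (rule mod_add_left_eq)
        ultimately have "((v + a + 1) mod q + (q - 1 - a)) mod q = v" using ke(3) by simp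
        then have vv: "vv u a = v" unfolding vv_def using ds[OF True] by simp
        have "\<forall>l<m. digit q j l = G u a l" using ds d vv True by (auto simp: G_def)
        then show ?thesis using vv True by simp
      next
        case False
        then have um: "u = m" using ke(2) by simp
        from P have c: "int q dvd int (\<Sum>l<m. digit q j l) + int a - int v + 1" and sv: "s = rep q m (digit q j)"
          unfolding ke(1) um B_m[OF ke(3)] am by (auto split: if_splits)
        have ds: "\<And>l. l < m \<Longrightarrow> digit q s l = digit q j l" unfolding sv using digit_rep[OF q0] digit_lt by simp
        have S: "(\<Sum>l<m. digit q s l) = (\<Sum>l<m. digit q j l)" by (rule sum.cong) (auto simp: ds)
        have "int q dvd int ((\<Sum>l<m. digit q j l) + a + 1) - int v" using c by (simp add: algebra_simps)
        then have "((\<Sum>l<m. digit q j l) + a + 1) mod q = v mod q" by (simp only: nat_mod_eq_dvd)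
        then have "w a = v" unfolding w_def S using ke(3) by simp
        then show ?thesis using ds False by (auto simp: G_def)
      qed
      have jeq: "j = rep q m (G u a) + a*q^m"
        using row_split[of j] rep_cong[of m "digit q j" "G u a"] djv a_def by simp
      have "f (u,a) = (j,k)" unfolding f_def ke(1) using jeq djv by simp
      then show "f (g y) = y" using gy y by simp
    qed
    show "f ` ?A \<subseteq> ?T"
    proof
      fix y assume "y \<in> f ` ?A"
      then obtain u a where y: "y = f (u,a)" and u: "u \<le> m" and a: "a < q-1" by auto
      let ?j = "rep q m (G u a) + a*q^m"
      have jF: "?j < (q-1)*q^m" by (rule mk_row(1)[OF Gq a])
      have jd: "\<And>l. l<m \<Longrightarrow> digit q ?j l = G u a l" by (rule mk_row(2)[OF Gq a])
      have jm: "digit q ?j m = a" by (rule mk_row(3)[OF Gq a])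
      show "y \<in> ?T"
      proof (cases "u < m")
        case True
        have k: "u*q + vv u a < q*(m+1)" using col_lt u vvq by blast
        have du: "digit q ?j u = vv u a" using jd[OF True] by (simp add: G_def True)
        have "digit q s u + (q - 1 - a) + a + 1 = digit q s u + q" using a by arith
        moreover have "((digit q s u + (q - 1 - a)) mod q + (a + 1)) mod q = (digit q s u + (q - 1 - a) + (a+1)) mod q"
          by (rule mod_add_left_eq)
        ultimately have e: "(vv u a + a + 1) mod q = digit q s u" unfolding vv_def using digit_lt[of s u]
          by (simp add: add.assoc)
        have "rep q m (\<lambda>l. if l = u then (digit q ?j u + digit q ?j m + 1) mod q else digit q ?j l) = rep q m (digit q s)"
        proof (rule rep_cong)
          fix l assume l: "l < m"
          have "l \<noteq> u \<Longrightarrow> G u a l = digit q s l" by (simp add: G_def)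
          then show "(if l = u then (digit q ?j u + digit q ?j m + 1) mod q else digit q ?j l) = digit q s l"
            using du jm e jd[OF l] by auto
        qed
        then have "B_arr q m ?j (u*q + vv u a) = Some s" using B_lt[OF True vvq] du sd by simp
        then show ?thesis using jF k y True by (simp add: f_def)
      next
        case False
        then have um: "u = m" using u by simp
        have k: "m*q + w a < q*(m+1)" using col_lt wq by blast
        have dj: "\<And>l. l<m \<Longrightarrow> digit q ?j l = digit q s l" using jd False by (simp add: G_def)
        have S: "(\<Sum>l<m. digit q ?j l) = (\<Sum>l<m. digit q s l)" by (rule sum.cong) (auto simp: dj)
        have "((\<Sum>l<m. digit q s l) + a + 1) mod q = w a mod q" unfolding w_def by simp
        then have "int q dvd int ((\<Sum>l<m. digit q s l) + a + 1) - int (w a)" by (simp only: nat_mod_eq_dvd)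
        then have c: "int q dvd int (\<Sum>l<m. digit q ?j l) + int (digit q ?j m) - int (w a) + 1"
          unfolding S jm by (simp add: algebra_simps)
        have r: "rep q m (digit q ?j) = s" using sd rep_cong[of m "digit q ?j" "digit q s"] dj by simp
        have "B_arr q m ?j (m*q + w a) = Some s" unfolding B_m[OF wq] using c r by simp
        then show ?thesis using jF k y um by (simp add: f_def)
      qed
    qed
    show "g ` ?T \<subseteq> ?A"
    proof
      fix x assume "x \<in> g ` ?T"
      then obtain j k where x: "x = g (j,k)" and j: "j < (q-1)*q^m" and k: "k < q*(m+1)" by auto
      obtain u v where ke: "k = u*q+v" "u \<le> m" "v < q" using col_split[OF k] by blast
      have "k div q = u" using ke q0 by simp
      then show "x \<in> ?A" using x ke row_digits(1)[OF j] by (simp add: g_def)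
    qed
  qed
  then have "card ?T = card ?A" by (rule bij_betw_same_card[symmetric])
  then show ?thesis by (simp add: card_cartesian_product)
qed


lemma col_count_lt:
  assumes u: "u < m" and v: "v < q"
  shows "card {j. j < (q-1)*q^m \<and> B_arr q m j (u*q+v) \<noteq> None} = (q-1)*q^(m-1)"
proof -
  define N where "N = (q-1)*q^(m-1-u)"
  have NF: "N * q^(Suc u) = (q-1)*q^m"
  proof -
    have "m - 1 - u + Suc u = m" using u by simp
    then have "q^(m-1-u) * q^(Suc u) = q^m" by (metis power_add)
    then show ?thesis unfolding N_def by (simp add: mult.assoc)
  qed
  define f where "f = (\<lambda>(y::nat, A::nat). A*q^(Suc u) + v*q^u + y)"
  define g where "g = (\<lambda>j::nat. (j mod q^u, j div q^(Suc u)))"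
  let ?A = "{..<q^u} \<times> {..<N}"
  let ?T = "{j. j < (q-1)*q^m \<and> B_arr q m j (u*q+v) \<noteq> None}"
  have T: "?T = {j. j < (q-1)*q^m \<and> digit q j u = v}" using B_lt[OF u v] by auto
  have bij: "bij_betw f ?A ?T"
  proof (rule bij_betw_byWitness[where f'=g])
    show "\<forall>x\<in>?A. g (f x) = x"
      using decomp_inv[OF q0 _ v] by (auto simp: f_def g_def)
    show "\<forall>y\<in>?T. f (g y) = y"
    proof
      fix j assume "j \<in> ?T"
      then have d: "digit q j u = v" unfolding T by simp
      show "f (g j) = j" using decomp[OF q0, of j u] d by (simp add: f_def g_def)
    qed
    show "f ` ?A \<subseteq> ?T"
    proof
      fix j assume "j \<in> f ` ?A"
      then obtain y A where j: "j = A*q^(Suc u) + v*q^u + y" and y: "y < q^u" and A: "A < N"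
        by (auto simp: f_def)
      have "j < A*q^(Suc u) + q^(Suc u)" using low_lt[OF y v] j by simp
      also have "\<dots> = (A+1)*q^(Suc u)" by simp
      also have "\<dots> \<le> N*q^(Suc u)" using A by (intro mult_right_mono) auto
      finally have jF: "j < (q-1)*q^m" using NF by simp
      have "digit q j u = v" unfolding j using digit_decomp[OF q0 y v, of A u] by simp
      then show "j \<in> ?T" unfolding T using jF by simp
    qed
    show "g ` ?T \<subseteq> ?A"
    proof
      fix x assume "x \<in> g ` ?T"
      then obtain j where x: "x = g j" and j: "j < (q-1)*q^m" by auto
      have "j div q^(Suc u) < N" using j NF by (simp add: less_mult_imp_div_less)
      then show "x \<in> ?A" using x q0 by (simp add: g_def)
    qed
  qed
  then have "card ?T = card ?A" by (rule bij_betw_same_card[symmetric])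
  also have "\<dots> = q^u * N" by (simp add: card_cartesian_product)
  also have "\<dots> = (q-1)*q^(m-1)"
  proof -
    have "u + (m-1-u) = m - 1" using u by simp
    then have "q^u * q^(m-1-u) = q^(m-1)" by (metis power_add)
    then show ?thesis unfolding N_def by (metis mult.left_commute)
  qed
  finally show ?thesis .
qed


lemma col_count_m:
  assumes v: "v < q"
  shows "card {j. j < (q-1)*q^m \<and> B_arr q m j (m*q+v) \<noteq> None} = (q-1)*q^(m-1)"
proof -
  obtain m' where mm: "m = Suc m'" using m1 by (cases m) auto
  let ?S = "\<lambda>y. \<Sum>l<m'. digit q y l"
  define d where "d y a = nat ((int v - 1 - int (?S y) - int a) mod int q)" for y a
  have dq: "d y a < q" for y a
  proof -
    have "(int v - 1 - int (?S y) - int a) mod int q < int q" using q0 by simp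
    moreover have "(int v - 1 - int (?S y) - int a) mod int q \<ge> 0" using q0 by simp
    ultimately show ?thesis unfolding d_def by linarith
  qed
  have dint: "int (d y a) = (int v - 1 - int (?S y) - int a) mod int q" for y a
    unfolding d_def using q0 by simp
  define f where "f = (\<lambda>(y::nat, a::nat). a*q^(Suc m') + d y a*q^m' + y)"
  define g where "g = (\<lambda>j::nat. (j mod q^m', j div q^(Suc m')))"
  let ?A = "{..<q^m'} \<times> {..<q-1}"
  let ?T = "{j. j < (q-1)*q^m \<and> B_arr q m j (m*q+v) \<noteq> None}"
  have T: "?T = {j. j < (q-1)*q^m \<and> int q dvd int (\<Sum>l<m. digit q j l) + int (digit q j m) - int v + 1}"
    using B_m[OF v] by auto
  have dd: "digit q (a*q^(Suc m') + e*q^m' + y) l = (if l < m' then digit q y l else if l = m' then e else digit q a (l - Suc m'))"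
    if "y < q^m'" "e < q" for a e y l using digit_decomp[OF q0 that] .
  have sumd: "(\<Sum>l<m. digit q (a*q^(Suc m') + e*q^m' + y) l) = ?S y + e" if "y < q^m'" "e < q" for a e y
  proof -
    have "(\<Sum>l<m. digit q (a*q^(Suc m') + e*q^m' + y) l) = (\<Sum>l<m'. digit q (a*q^(Suc m') + e*q^m' + y) l) + e"
      unfolding mm using dd[OF that] by simp
    also have "(\<Sum>l<m'. digit q (a*q^(Suc m') + e*q^m' + y) l) = ?S y"
    proof (rule sum.cong)
      fix l assume "l \<in> {..<m'}"
      then show "digit q (a*q^(Suc m') + e*q^m' + y) l = digit q y l" using dd[OF that, of a l] by simp
    qed simp
    finally show ?thesis .
  qed
  have topd: "digit q (a*q^(Suc m') + e*q^m' + y) m = a" if "y < q^m'" "e < q" "a < q" for a e y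
    using dd[OF that(1,2), of a m] that(3) unfolding mm by (simp add: digit_def)
  have bij: "bij_betw f ?A ?T"
  proof (rule bij_betw_byWitness[where f'=g])
    show "\<forall>x\<in>?A. g (f x) = x"
      using decomp_inv[OF q0 _ dq] by (auto simp: f_def g_def)
    show "\<forall>y\<in>?T. f (g y) = y"
    proof
      fix j assume "j \<in> ?T"
      then have j: "j < (q-1)*q^m" and c: "int q dvd int (\<Sum>l<m. digit q j l) + int (digit q j m) - int v + 1"
        unfolding T by auto
      define y where "y = j mod q^m'"
      define a where "a = j div q^(Suc m')"
      define e where "e = digit q j m'"
      have y: "y < q^m'" unfolding y_def using q0 by simp
      have e: "e < q" unfolding e_def by (rule digit_lt)
      have jd: "j = a*q^(Suc m') + e*q^m' + y" unfolding a_def e_def y_def by (rule decomp[OF q0])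
      have aq: "a < q" using row_digits(1)[OF j] unfolding a_def mm by simp
      have Sj: "(\<Sum>l<m. digit q j l) = ?S y + e" using sumd[OF y e, of a] jd by simp
      have dm: "digit q j m = a" using topd[OF y e aq] jd by simp
      have "int q dvd int e - (int v - 1 - int (?S y) - int a)" using c unfolding Sj dm by (simp add: algebra_simps)
      then have "int e mod int q = (int v - 1 - int (?S y) - int a) mod int q" by (simp only: mod_eq_dvd_iff)
      then have "int e = int (d y a)" unfolding dint using e by simp
      then have "d y a = e" by simp
      moreover have "g j = (y, a)" unfolding g_def a_def y_def by simp
      ultimately show "f (g j) = j" using jd by (simp add: f_def)
    qed
    show "f ` ?A \<subseteq> ?T"
    proof
      fix j assume "j \<in> f ` ?A"
      then obtain y a where j: "j = a*q^(Suc m') + d y a*q^m' + y" and y: "y < q^m'" and a: "a < q - 1"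
        by (auto simp: f_def)
      have "j < a*q^(Suc m') + q^(Suc m')" using low_lt[OF y dq] j by simp
      also have "\<dots> = (a+1)*q^(Suc m')" by simp
      also have "\<dots> \<le> (q-1)*q^(Suc m')" using a by (intro mult_right_mono) auto
      finally have jF: "j < (q-1)*q^m" using mm by simp
      have Sj: "(\<Sum>l<m. digit q j l) = ?S y + d y a" using sumd[OF y dq] j by simp
      have dm: "digit q j m = a" using topd[OF y dq] j a by simp
      have "(int v - 1 - int (?S y) - int a) mod int q mod int q = (int v - 1 - int (?S y) - int a) mod int q" by simp
      then have "int q dvd (int v - 1 - int (?S y) - int a) mod int q - (int v - 1 - int (?S y) - int a)"
        by (simp only: mod_eq_dvd_iff)
      then have "int q dvd int (\<Sum>l<m. digit q j l) + int (digit q j m) - int v + 1"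
        unfolding Sj dm using dint[of y a] by (simp add: algebra_simps)
      then show "j \<in> ?T" unfolding T using jF by simp
    qed
    show "g ` ?T \<subseteq> ?A"
    proof
      fix x assume "x \<in> g ` ?T"
      then obtain j where x: "x = g j" and j: "j < (q-1)*q^m" by auto
      have "j div q^(Suc m') < q - 1" using row_digits(1)[OF j] mm by simp
      then show "x \<in> ?A" using x q0 by (simp add: g_def)
    qed
  qed
  then have "card ?T = card ?A" by (rule bij_betw_same_card[symmetric])
  also have "\<dots> = (q-1)*q^(m-1)" using mm by (simp add: card_cartesian_product)
  finally show ?thesis .
qed


lemma some_count:
  assumes k: "k < q*(m+1)"
  shows "card {j. j < (q-1)*q^m \<and> B_arr q m j k \<noteq> None} = (q-1)*q^(m-1)"
proof -
  obtain u v where ke: "k = u*q+v" "u \<le> m" "v < q" using col_split[OF k] by blast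
  show ?thesis
  proof (cases "u < m")
    case True then show ?thesis using col_count_lt[OF True ke(3)] ke(1) by simp
  next
    case False then have "u = m" using ke(2) by simp
    then show ?thesis using col_count_m[OF ke(3)] ke(1) by simp
  qed
qed

lemma none_count:
  assumes k: "k < q*(m+1)"
  shows "card {j. j < (q-1)*q^m \<and> B_arr q m j k = None} = (q-1)^2*q^(m-1)"
proof -
  let ?T = "{j. j < (q-1)*q^m \<and> B_arr q m j k \<noteq> None}"
  have e: "{j. j < (q-1)*q^m \<and> B_arr q m j k = None} = {..<(q-1)*q^m} - ?T" by auto
  have "card ({..<(q-1)*q^m} - ?T) = card {..<(q-1)*q^m} - card ?T"
    by (rule card_Diff_subset) auto
  also have "\<dots> = (q-1)*q^m - (q-1)*q^(m-1)" using some_count[OF k] by simp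
  also have "\<dots> = (q-1)^2*q^(m-1)"
  proof -
    have qm: "q^m = q*q^(m-1)" using m1 by (metis Suc_diff_le diff_Suc_1 power_Suc)
    have "(q-1)*q^m - (q-1)*q^(m-1) = q*((q-1)*q^(m-1)) - 1*((q-1)*q^(m-1))" unfolding qm by (simp add: mult.left_commute)
    also have "\<dots> = (q-1)*((q-1)*q^(m-1))" by (simp only: diff_mult_distrib[symmetric])
    also have "\<dots> = (q-1)^2*q^(m-1)" by (simp add: power2_eq_square)
    finally show ?thesis .
  qed
  finally show ?thesis using e by simp
qed

lemma vals_lt:
  assumes j: "j < (q-1)*q^m" and k: "k < q*(m+1)" and s: "B_arr q m j k = Some s"
  shows "s < q^m"
proof -
  obtain u v where ke: "k = u*q+v" "u \<le> m" "v < q" using col_split[OF k] by blast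
  show ?thesis
  proof (cases "u < m")
    case True
    from s have "s = rep q m (\<lambda>l. if l = u then (digit q j u + digit q j m + 1) mod q else digit q j l)"
      unfolding ke(1) B_lt[OF True ke(3)] by (auto split: if_splits)
    then show ?thesis using rep_lt[OF q0] q0 digit_lt by auto
  next
    case False then have um: "u = m" using ke(2) by simp
    from s have "s = rep q m (digit q j)" unfolding ke(1) um B_m[OF ke(3)] by (auto split: if_splits)
    then show ?thesis using rep_lt[OF q0] digit_lt by auto
  qed
qed

lemma c3:
  assumes j1: "j1 < (q-1)*q^m" and j2: "j2 < (q-1)*q^m" and k1: "k1 < q*(m+1)" and k2: "k2 < q*(m+1)"
    and ne: "(j1,k1) \<noteq> (j2,k2)" and s1: "B_arr q m j1 k1 = Some s" and s2: "B_arr q m j2 k2 = Some s"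
  shows "j1 \<noteq> j2 \<and> k1 \<noteq> k2 \<and> B_arr q m j1 k2 = None \<and> B_arr q m j2 k1 = None"
proof -
  have n1: "B_arr q m j1 k2 = None" by (rule key_none[OF j1 j2 k1 k2 ne s1 s2])
  have n2: "B_arr q m j2 k1 = None" by (rule key_none[OF j2 j1 k2 k1 _ s2 s1]) (use ne in auto)
  have "j1 \<noteq> j2" using n1 s2 by auto
  moreover have "k1 \<noteq> k2" using n1 s1 by auto
  ultimately show ?thesis using n1 n2 by simp
qed

end

theorem theorem5:
  fixes q m :: nat
  assumes "q \<ge> 2" and "m \<ge> 1"
  shows "is_regular_PDA ((q - 1) * (m + 1)) (q * (m + 1)) ((q - 1) * q ^ m)
           ((q - 1)^2 * q ^ (m - 1)) (q ^ m) (B_arr q m)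
         \<and> PDA_rate (q ^ m) ((q - 1) * q ^ m) = 1 / real (q - 1)"
proof -
  interpret qm q m using assms by unfold_locales
  have P: "is_PDA (q * (m + 1)) ((q - 1) * q ^ m) ((q - 1)^2 * q ^ (m - 1)) (q ^ m) (B_arr q m)"
    unfolding is_PDA_def using vals_lt none_count c3 by blast
  have R: "\<forall>s<q^m. card {(j, k). j < (q - 1) * q ^ m \<and> k < q * (m + 1) \<and> B_arr q m j k = Some s} = (q - 1) * (m + 1)"
    using val_count by blast
  have "PDA_rate (q ^ m) ((q - 1) * q ^ m) = 1 / real (q - 1)"
    unfolding PDA_rate_def using q0 by (simp add: of_nat_diff)
  then show ?thesis using P R unfolding is_regular_PDA_def by blast
qed

end
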